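(* Let $n\ge1$, $\beta\ge2(n+2)$ and let $\Pi$ be a parameter set. Let $\mathcal{M}_\beta$ be the set of infinite matrices $A=(A_{ij})_{i,j\ge1}$ whose entries $A_{ij}=A_{ij}(\xi)$ are complex $2\times2$ matrices depending on $\xi\in\Pi$, such that $[A]_\beta<\infty$, where $[A]_\beta$ is the smallest constant with $$\sup_{\xi\in\Pi}\|A_{ij}(\xi)\|_{HS}\le\frac{[A]_\beta}{(1+\ln i)^\beta(1+\ln j)^\beta(1+|i-j|)}\quad\text{for all } i,j\ge1,$$ $\|\cdot\|_{HS}$ denoting the Hilbert–Schmidt norm. Then for $A,B\in\mathcal{M}_\beta$ the product $(A\cdot B)_{jl}=\sum_{k\ge1}A_{jk}B_{kl}$ satisfies $A\cdot B\in\mathcal{M}_\beta$ and $[A\cdot B]_\beta\le C[A]_\beta[B]_\beta$ for a constant $C$ independent of $A,B$. *)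

theory Defs
  imports "HOL-Analysis.Analysis"
begin

definition hs_norm :: "complex^2^2 \<Rightarrow> real" where
  "hs_norm M = sqrt (\<Sum>i\<in>UNIV. \<Sum>j\<in>UNIV. (cmod (M $ i $ j))\<^sup>2)"

text \<open>Infinite matrices indexed by i, j \<ge> 1 (index 0 is ignored), with entries depending
  on a parameter xi of type 'p (the parameter set Pi is the universe of 'p).\<close>

type_synonym 'p inf_mat = "nat \<Rightarrow> nat \<Rightarrow> 'p \<Rightarrow> complex^2^2"

definition weight :: "real \<Rightarrow> nat \<Rightarrow> nat \<Rightarrow> real" where
  "weight \<beta> i j = (1 + ln (real i)) powr \<beta> * (1 + ln (real j)) powr \<beta>
                     * (1 + \<bar>real i - real j\<bar>)"

text \<open>c is an admissible constant in the definition of [A]_beta; the bound on the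
  supremum over xi is written pointwise in xi (equivalent, avoids junk values of SUP).\<close>
definition admissible :: "real \<Rightarrow> 'p inf_mat \<Rightarrow> real \<Rightarrow> bool" where
  "admissible \<beta> A c \<longleftrightarrow>
     (\<forall>i\<ge>1. \<forall>j\<ge>1. \<forall>\<xi>. hs_norm (A i j \<xi>) \<le> c / weight \<beta> i j)"

definition in_M :: "real \<Rightarrow> 'p inf_mat \<Rightarrow> bool" where
  "in_M \<beta> A \<longleftrightarrow> (\<exists>c. admissible \<beta> A c)"

definition M_norm :: "real \<Rightarrow> 'p inf_mat \<Rightarrow> real" where
  "M_norm \<beta> A = Inf {c. admissible \<beta> A c}"

definition inf_mat_mult :: "'p inf_mat \<Rightarrow> 'p inf_mat \<Rightarrow> 'p inf_mat" where
  "inf_mat_mult A B = (\<lambda>j l \<xi>. \<Sum>k. A j (Suc k) \<xi> ** B (Suc k) l \<xi>)"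

end

theory Submission
  imports Defs
begin


lemma hs_norm_eq: "hs_norm M = norm M"
  unfolding hs_norm_def norm_vec_def L2_set_def
  by (simp add: real_sqrt_pow2 sum_nonneg)

lemma norm_vec_le_sum: "norm (x::'a::real_normed_vector^'n) \<le> (\<Sum>i\<in>UNIV. norm (x$i))"
  unfolding norm_vec_def by (rule L2_set_le_sum) simp

lemma norm_mult22: "norm ((A::complex^2^2) ** (B::complex^2^2)) \<le> 8 * norm A * norm B"
proof -
  have e: "norm ((A ** B) $ i $ l) \<le> 2 * (norm A * norm B)" for i l
  proof -
    have "norm ((A ** B) $ i $ l) = norm (\<Sum>k\<in>UNIV. A$i$k * B$k$l)"
      by (simp add: matrix_matrix_mult_def)
    also have "\<dots> \<le> (\<Sum>k\<in>(UNIV::2 set). norm (A$i$k) * norm (B$k$l))"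
      by (rule order_trans[OF norm_sum]) (simp add: norm_mult)
    also have "\<dots> \<le> (\<Sum>k\<in>(UNIV::2 set). norm A * norm B)"
    proof (rule sum_mono)
      fix k
      have "norm (A$i$k) \<le> norm A" using Finite_Cartesian_Product.norm_nth_le[of "A$i" k] Finite_Cartesian_Product.norm_nth_le[of A i] by linarith
      moreover have "norm (B$k$l) \<le> norm B" using Finite_Cartesian_Product.norm_nth_le[of "B$k" l] Finite_Cartesian_Product.norm_nth_le[of B k] by linarith
      ultimately show "norm (A$i$k) * norm (B$k$l) \<le> norm A * norm B"
        by (simp add: mult_mono)
    qed
    finally show ?thesis by simp
  qed
  have "norm (A ** B) \<le> (\<Sum>i\<in>(UNIV::2 set). norm ((A**B)$i))" by (rule norm_vec_le_sum)
  also have "\<dots> \<le> (\<Sum>i\<in>(UNIV::2 set). \<Sum>l\<in>(UNIV::2 set). norm ((A**B)$i$l))"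
    by (rule sum_mono, rule norm_vec_le_sum)
  also have "\<dots> \<le> (\<Sum>i\<in>(UNIV::2 set). \<Sum>l\<in>(UNIV::2 set). 2 * (norm A * norm B))"
    by (intro sum_mono e)
  finally show ?thesis by simp
qed


definition LL :: "nat \<Rightarrow> real" where "LL k = 1 + ln (real k)"
definition hh :: "nat \<Rightarrow> real" where "hh k = 1 / (real k * (LL k)^2)"

lemma LL_ge1: "k \<ge> 1 \<Longrightarrow> LL k \<ge> 1"
  unfolding LL_def by simp

lemma hh_nonneg: "hh k \<ge> 0"
  unfolding hh_def by simp

lemma ln_low: "x > 0 \<Longrightarrow> 1 - 1/x \<le> ln (x::real)"
proof -
  assume x: "x > 0"
  have "ln (1/x) \<le> 1/x - 1" using x by (intro ln_le_minus_one) simp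
  then show ?thesis using x by (simp add: ln_div)
qed

lemma ln_step: assumes N: "N \<ge> 1" shows "1 / real (Suc N) \<le> ln (real (Suc N)) - ln (real N)"
proof -
  have "1 - 1 / (real (Suc N) / real N) \<le> ln (real (Suc N) / real N)"
    using N by (intro ln_low) auto
  moreover have "1 - 1 / (real (Suc N) / real N) = 1 / real (Suc N)"
    using N by (simp add: field_simps)
  moreover have "ln (real (Suc N) / real N) = ln (real (Suc N)) - ln (real N)"
    using N by (simp add: ln_div)
  ultimately show ?thesis by simp
qed

lemma hh_step: assumes N: "N \<ge> 1" shows "hh (Suc N) \<le> 1 / LL N - 1 / LL (Suc N)"
proof -
  define a where "a = LL N"
  define b where "b = LL (Suc N)"
  have a1: "a \<ge> 1" using N LL_ge1 a_def by auto
  have ab: "a \<le> b" using N unfolding a_def b_def LL_def by simp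
  have d: "1 / real (Suc N) \<le> b - a" using ln_step[OF N] unfolding a_def b_def LL_def by simp
  have "hh (Suc N) = (1 / real (Suc N)) / (b * b)" unfolding hh_def b_def by (simp add: power2_eq_square)
  also have "\<dots> \<le> (b - a) / (b * b)" using d a1 ab by (intro divide_right_mono) auto
  also have "\<dots> \<le> (b - a) / (a * b)" using d a1 ab
    by (intro divide_left_mono mult_right_mono) auto
  also have "\<dots> = 1 / a - 1 / b" using a1 ab by (simp add: field_simps)
  finally show ?thesis unfolding a_def b_def .
qed

lemma hh_partial_aux: "N \<ge> 1 \<Longrightarrow> (\<Sum>k<N. hh (Suc k)) \<le> 2 - 1 / LL N"
proof (induction N)
  case 0 then show ?case by simp
next
  case (Suc N)
  show ?case
  proof (cases "N = 0")
    case True then show ?thesis by (simp add: hh_def LL_def)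
  next
    case False
    then have "N \<ge> 1" by simp
    then have "(\<Sum>k<N. hh (Suc k)) \<le> 2 - 1 / LL N" using Suc.IH by simp
    moreover have "hh (Suc N) \<le> 1 / LL N - 1 / LL (Suc N)" using hh_step \<open>N \<ge> 1\<close> by simp
    ultimately show ?thesis by simp
  qed
qed

lemma hh_partial: "(\<Sum>k<N. hh (Suc k)) \<le> 2"
proof (cases "N = 0")
  case True then show ?thesis by simp
next
  case False
  then have "(\<Sum>k<N. hh (Suc k)) \<le> 2 - 1 / LL N" using hh_partial_aux by simp
  moreover have "LL N \<ge> 1" using False LL_ge1 by simp
  moreover have "1 / LL N \<ge> 0" using \<open>LL N \<ge> 1\<close> by simp
  ultimately show ?thesis by linarith
qed

definition dd :: "nat \<Rightarrow> nat \<Rightarrow> nat" where "dd a b = (if b \<le> a then a - b else b - a)"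

lemma dd_abs: "real (dd a b) = \<bar>real a - real b\<bar>"
  unfolding dd_def by auto

lemma inj_sum_le:
  assumes "inj_on f A" "f ` A \<subseteq> B" "finite B" "\<And>x. g x \<ge> (0::real)"
  shows "(\<Sum>x\<in>A. g (f x)) \<le> (\<Sum>y\<in>B. g y)"
proof -
  have "(\<Sum>x\<in>A. g (f x)) = (\<Sum>y\<in>f ` A. g y)" using assms(1) by (simp add: sum.reindex)
  also have "\<dots> \<le> (\<Sum>y\<in>B. g y)" using assms by (intro sum_mono2) auto
  finally show ?thesis .
qed

lemma dd_partial: "(\<Sum>k<N. hh (Suc (dd (Suc k) l))) \<le> 4"
proof -
  define A1 where "A1 = {k\<in>{..<N}. l \<le> Suc k}"
  define A2 where "A2 = {k\<in>{..<N}. \<not> l \<le> Suc k}"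
  have split: "{..<N} = A1 \<union> A2" "A1 \<inter> A2 = {}" unfolding A1_def A2_def by auto
  have "(\<Sum>k<N. hh (Suc (dd (Suc k) l))) = (\<Sum>k\<in>A1. hh (Suc (dd (Suc k) l))) + (\<Sum>k\<in>A2. hh (Suc (dd (Suc k) l)))"
    unfolding split(1) by (rule sum.union_disjoint) (auto simp: A1_def A2_def)
  also have "(\<Sum>k\<in>A1. hh (Suc (dd (Suc k) l))) = (\<Sum>k\<in>A1. hh (Suc (Suc k - l)))"
    unfolding A1_def dd_def by (intro sum.cong) auto
  also have "\<dots> \<le> (\<Sum>m<Suc N. hh (Suc m))"
    by (rule inj_sum_le[where g="\<lambda>m. hh (Suc m)" and f="\<lambda>k. Suc k - l"])
       (auto simp: A1_def inj_on_def hh_nonneg)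
  also have "(\<Sum>k\<in>A2. hh (Suc (dd (Suc k) l))) = (\<Sum>k\<in>A2. hh (Suc (l - Suc k)))"
    unfolding A2_def dd_def by (intro sum.cong) auto
  also have "\<dots> \<le> (\<Sum>m<l. hh (Suc m))"
    by (rule inj_sum_le[where g="\<lambda>m. hh (Suc m)" and f="\<lambda>k. l - Suc k"])
       (auto simp: A2_def inj_on_def hh_nonneg)
  finally show ?thesis using hh_partial[of "Suc N"] hh_partial[of l] by simp
qed

lemma phi_bound:
  assumes k: "k \<ge> 1"
  shows "1 / ((LL k)^2 * (1 + real m)) \<le> 4 * hh (Suc m) + hh k"
proof (cases "1 + real m \<le> real k ^ 2")
  case True
  have "ln (1 + real m) \<le> ln (real k ^ 2)" using True k by simp
  also have "\<dots> = 2 * ln (real k)" using k by (simp add: ln_realpow)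
  finally have "LL (Suc m) \<le> 2 * LL k" unfolding LL_def using k by simp
  moreover have "LL (Suc m) \<ge> 1" using LL_ge1 by simp
  ultimately have "(LL (Suc m))^2 \<le> 4 * (LL k)^2"
    using power_mono[of "LL (Suc m)" "2 * LL k" 2] by (simp add: power_mult_distrib)
  then have P: "(LL (Suc m))^2 * (1 + real m) \<le> (4 * (LL k)^2) * (1 + real m)"
    by (intro mult_right_mono) auto
  have P0: "0 < (LL (Suc m))^2 * (1 + real m)" using \<open>LL (Suc m) \<ge> 1\<close> by simp
  have "1 / ((LL k)^2 * (1 + real m)) = 4 / ((4 * (LL k)^2) * (1 + real m))" by simp
  also have "\<dots> \<le> 4 / ((LL (Suc m))^2 * (1 + real m))"
    by (rule frac_le) (use P P0 in auto)
  also have "\<dots> = 4 * (1 / ((LL (Suc m))^2 * (1 + real m)))" by simp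
  also have "\<dots> = 4 * hh (Suc m)" unfolding hh_def by (simp add: mult.commute)
  finally show ?thesis using hh_nonneg[of k] by simp
next
  case False
  have "real k \<le> real k ^ 2" using k by (simp add: power2_eq_square)
  then have "real k \<le> 1 + real m" using False by linarith
  then have "1 / ((LL k)^2 * (1 + real m)) \<le> 1 / ((LL k)^2 * real k)"
    using LL_ge1[OF k] k by (intro divide_left_mono mult_left_mono) auto
  also have "\<dots> = hh k" unfolding hh_def by (simp add: mult.commute)
  finally show ?thesis using hh_nonneg[of "Suc m"] by simp
qed



lemma weight_eq: "weight \<beta> i j = LL i powr \<beta> * LL j powr \<beta> * (1 + real (dd i j))"
  unfolding weight_def LL_def dd_abs ..

lemma weight_pos: "i \<ge> 1 \<Longrightarrow> j \<ge> 1 \<Longrightarrow> weight \<beta> i j > 0"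
  unfolding weight_eq using LL_ge1[of i] LL_ge1[of j] by simp

lemma term_bound:
  assumes b: "\<beta> \<ge> 1" and j: "j \<ge> 1" and k: "k \<ge> 1" and l: "l \<ge> 1"
  shows "weight \<beta> j l / (weight \<beta> j k * weight \<beta> k l)
         \<le> 4 * hh (Suc (dd k j)) + 4 * hh (Suc (dd k l)) + 2 * hh k"
proof -
  define a where "a = LL j powr \<beta>"
  define c where "c = LL l powr \<beta>"
  define p where "p = LL k powr \<beta>"
  define x where "x = 1 + real (dd k j)"
  define y where "y = 1 + real (dd k l)"
  define z where "z = 1 + real (dd j l)"
  define q where "q = LL k"
  have q1: "q \<ge> 1" using LL_ge1[OF k] q_def by simp
  have a0: "a > 0" using LL_ge1[OF j] a_def by simp
  have c0: "c > 0" using LL_ge1[OF l] c_def by simp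
  have pq: "p \<ge> q" unfolding p_def q_def
    using powr_mono[OF b LL_ge1[OF k]] LL_ge1[OF k] by simp
  have x1: "x \<ge> 1" and y1: "y \<ge> 1" unfolding x_def y_def by auto
  have zxy: "z \<le> x + y" unfolding x_def y_def z_def dd_abs by linarith
  have w1: "weight \<beta> j l = a * c * z" unfolding weight_eq a_def c_def z_def by simp
  have w2: "weight \<beta> j k = a * p * x" unfolding weight_eq a_def p_def x_def dd_abs by (simp add: abs_minus_commute)
  have w3: "weight \<beta> k l = p * c * y" unfolding weight_eq c_def p_def y_def by simp
  have "weight \<beta> j l / (weight \<beta> j k * weight \<beta> k l) = z / (p * p * x * y)"
    unfolding w1 w2 w3 using a0 c0 by (simp add: field_simps)
  also have "\<dots> \<le> (x + y) / (q * q * x * y)"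
  proof (rule frac_le)
    show "0 \<le> x + y" using x1 y1 by simp
    show "z \<le> x + y" by (rule zxy)
    show "0 < q * q * x * y" using q1 x1 y1 by simp
    show "q * q * x * y \<le> p * p * x * y" using q1 pq x1 y1
      by (intro mult_right_mono mult_mono) auto
  qed
  also have "\<dots> = 1 / (q^2 * (1 + real (dd k l))) + 1 / (q^2 * (1 + real (dd k j)))"
    using q1 x1 y1 unfolding x_def[symmetric] y_def[symmetric] by (simp add: field_simps power2_eq_square)
  also have "\<dots> \<le> (4 * hh (Suc (dd k l)) + hh k) + (4 * hh (Suc (dd k j)) + hh k)"
    unfolding q_def by (intro add_mono phi_bound k)
  finally show ?thesis by simp
qed

lemma key_sum:
  assumes b: "\<beta> \<ge> 1" and j: "j \<ge> 1" and l: "l \<ge> 1"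
  shows "(\<Sum>k<N. 1 / (weight \<beta> j (Suc k) * weight \<beta> (Suc k) l)) \<le> 36 / weight \<beta> j l"
proof -
  define w where "w = weight \<beta> j l"
  have w0: "w > 0" unfolding w_def using weight_pos j l by simp
  have "(\<Sum>k<N. 1 / (weight \<beta> j (Suc k) * weight \<beta> (Suc k) l))
      = (\<Sum>k<N. (1 / w) * (w / (weight \<beta> j (Suc k) * weight \<beta> (Suc k) l)))"
    using w0 by (intro sum.cong) auto
  also have "\<dots> \<le> (\<Sum>k<N. (1 / w) * (4 * hh (Suc (dd (Suc k) j)) + 4 * hh (Suc (dd (Suc k) l)) + 2 * hh (Suc k)))"
    using w0 unfolding w_def by (intro sum_mono mult_left_mono term_bound b j l) auto
  also have "\<dots> = (1 / w) * (4 * (\<Sum>k<N. hh (Suc (dd (Suc k) j))) + 4 * (\<Sum>k<N. hh (Suc (dd (Suc k) l))) + 2 * (\<Sum>k<N. hh (Suc k)))"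
    by (simp add: sum_distrib_left sum.distrib flip: sum_divide_distrib)
  also have "\<dots> \<le> (1 / w) * (4 * 4 + 4 * 4 + 2 * 2)"
    using w0 dd_partial[where N=N and l=j] dd_partial[where N=N and l=l] hh_partial[of N]
    by (intro mult_left_mono add_mono) auto
  finally show ?thesis unfolding w_def by simp
qed



lemma adm_iff: "admissible \<beta> A c \<longleftrightarrow>
   (\<forall>i\<ge>1. \<forall>j\<ge>1. \<forall>\<xi>. hs_norm (A i j \<xi>) * weight \<beta> i j \<le> c)"
  unfolding admissible_def using weight_pos by (auto simp: pos_le_divide_eq)

lemma adm_nonneg: "admissible \<beta> A c \<Longrightarrow> c \<ge> 0"
proof -
  assume "admissible \<beta> A c"
  then have "hs_norm (A 1 1 undefined) * weight \<beta> 1 1 \<le> c" unfolding adm_iff by auto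
  moreover have "hs_norm (A 1 1 undefined) * weight \<beta> 1 1 \<ge> 0"
    using weight_pos[of 1 1 \<beta>] by (simp add: hs_norm_eq)
  ultimately show ?thesis by linarith
qed

lemma bdd: "bdd_below {c. admissible \<beta> A c}"
  using adm_nonneg by (intro bdd_belowI[where m=0]) auto

lemma M_norm_le: "admissible \<beta> A c \<Longrightarrow> M_norm \<beta> A \<le> c"
  unfolding M_norm_def by (rule cInf_lower) (auto intro: bdd)

lemma M_norm_adm: "in_M \<beta> A \<Longrightarrow> admissible \<beta> A (M_norm \<beta> A)"
proof -
  assume "in_M \<beta> A"
  then have ne: "{c. admissible \<beta> A c} \<noteq> {}" unfolding in_M_def by auto
  show ?thesis unfolding adm_iff
  proof (intro allI impI)
    fix i j \<xi> assume i: "i \<ge> (1::nat)" and j: "j \<ge> (1::nat)"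
    show "hs_norm (A i j \<xi>) * weight \<beta> i j \<le> M_norm \<beta> A"
      unfolding M_norm_def using i j by (intro cInf_greatest ne) (auto simp: adm_iff)
  qed
qed

lemma M_norm_nonneg: "in_M \<beta> A \<Longrightarrow> M_norm \<beta> A \<ge> 0"
  using M_norm_adm adm_nonneg by blast

theorem lemma5p5:
  fixes n :: nat and \<beta> :: real
  assumes "n \<ge> 1" and "\<beta> \<ge> 2 * (real n + 2)"
  shows "\<exists>C. \<forall>A B :: 'p inf_mat. in_M \<beta> A \<and> in_M \<beta> B \<longrightarrow>
           (\<forall>j\<ge>1. \<forall>l\<ge>1. \<forall>\<xi>. summable (\<lambda>k. A j (Suc k) \<xi> ** B (Suc k) l \<xi>))
         \<and> in_M \<beta> (inf_mat_mult A B)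
         \<and> M_norm \<beta> (inf_mat_mult A B) \<le> C * M_norm \<beta> A * M_norm \<beta> B"
proof (intro exI[of _ 288] allI impI)
  have b: "\<beta> \<ge> 1" using assms by simp
  fix A B :: "'p inf_mat"
  assume AB: "in_M \<beta> A \<and> in_M \<beta> B"
  define a where "a = M_norm \<beta> A"
  define b' where "b' = M_norm \<beta> B"
  have a0: "a \<ge> 0" and b0: "b' \<ge> 0" using AB M_norm_nonneg a_def b'_def by auto
  have Aa: "hs_norm (A i j \<xi>) \<le> a / weight \<beta> i j" if "i \<ge> 1" "j \<ge> 1" for i j \<xi>
    using M_norm_adm[of \<beta> A] AB that unfolding admissible_def a_def by auto
  have Bb: "hs_norm (B i j \<xi>) \<le> b' / weight \<beta> i j" if "i \<ge> 1" "j \<ge> 1" for i j \<xi>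
    using M_norm_adm[of \<beta> B] AB that unfolding admissible_def b'_def by auto
  define T where "T j l k = 1 / (weight \<beta> j (Suc k) * weight \<beta> (Suc k) l)" for j l k
  have main: "summable (\<lambda>k. A j (Suc k) \<xi> ** B (Suc k) l \<xi>) \<and>
     norm (\<Sum>k. A j (Suc k) \<xi> ** B (Suc k) l \<xi>) \<le> 288 * a * b' / weight \<beta> j l"
    if j: "j \<ge> 1" and l: "l \<ge> 1" for j l \<xi>
  proof -
    define f where "f k = A j (Suc k) \<xi> ** B (Suc k) l \<xi>" for k
    have T0: "T j l k \<ge> 0" for k unfolding T_def using weight_pos j l
      by (simp add: less_imp_le)
    have Tsum: "(\<Sum>k<N. T j l k) \<le> 36 / weight \<beta> j l" for N
      unfolding T_def by (rule key_sum[OF b j l])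
    have sT: "summable (T j l)" by (rule summableI_nonneg_bounded[OF T0 Tsum])
    have fb: "norm (f k) \<le> (8 * a * b') * T j l k" for k
    proof -
      have "norm (f k) \<le> 8 * norm (A j (Suc k) \<xi>) * norm (B (Suc k) l \<xi>)"
        unfolding f_def by (rule norm_mult22)
      also have "\<dots> \<le> 8 * (a / weight \<beta> j (Suc k)) * (b' / weight \<beta> (Suc k) l)"
        using Aa[OF j, of "Suc k" \<xi>] Bb[OF _ l, of "Suc k" \<xi>]
        using a0 weight_pos[OF j, of "Suc k" \<beta>]
        by (intro mult_mono mult_left_mono) (auto simp: hs_norm_eq less_imp_le)
      also have "\<dots> = (8 * a * b') * T j l k" unfolding T_def by simp
      finally show ?thesis .
    qed
    have sM: "summable (\<lambda>k. (8 * a * b') * T j l k)" using sT by (rule summable_mult)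
    have sn: "summable (\<lambda>k. norm (f k))"
      by (rule summable_comparison_test[OF _ sM]) (use fb in auto)
    have sf: "summable f" using sn by (rule summable_norm_cancel)
    have "norm (suminf f) \<le> (\<Sum>k. norm (f k))" by (rule summable_norm[OF sn])
    also have "\<dots> \<le> (\<Sum>k. (8 * a * b') * T j l k)" by (rule suminf_le[OF fb sn sM])
    also have "\<dots> = (8 * a * b') * (\<Sum>k. T j l k)" by (rule suminf_mult[OF sT])
    also have "\<dots> \<le> (8 * a * b') * (36 / weight \<beta> j l)"
      using a0 b0 by (intro mult_left_mono suminf_le_const[OF sT Tsum]) auto
    also have "\<dots> = 288 * a * b' / weight \<beta> j l" by simp
    finally show ?thesis using sf unfolding f_def by simp
  qed
  have adm: "admissible \<beta> (inf_mat_mult A B) (288 * a * b')"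
    unfolding admissible_def inf_mat_mult_def hs_norm_eq
    using main by auto
  show "(\<forall>j\<ge>1. \<forall>l\<ge>1. \<forall>\<xi>. summable (\<lambda>k. A j (Suc k) \<xi> ** B (Suc k) l \<xi>))
         \<and> in_M \<beta> (inf_mat_mult A B)
         \<and> M_norm \<beta> (inf_mat_mult A B) \<le> 288 * M_norm \<beta> A * M_norm \<beta> B"
    using main adm M_norm_le[OF adm] unfolding in_M_def a_def b'_def by blast
qed

end
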